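(* Let $N_f\ge 2$ be an integer, let $\beta>0$, $\lambda>0$, $r_c>0$, and let $p_r(i)=\frac{i^{-\beta}}{\sum_{k=1}^{N_f}k^{-\beta}}$ for $i=1,\dots,N_f$. Consider the optimization problem $$\max_{p_c(1),\dots,p_c(N_f)}\ \sum_{i=1}^{N_f}p_r(i)\left(1-e^{-\lambda p_c(i)\pi r_c^2}\right)\quad\text{s.t. } \sum_{i=1}^{N_f}p_c(i)=1,\ p_c(i)\ge 0,\ i=1,\dots,N_f.$$ If $\frac{N_f^{N_f}}{N_f!}<e^{\frac{\lambda\pi r_c^2}{\beta}}$, then the optimal solution is $$p_c^*(i)=\frac{1}{N_f}\left(1+\frac{\beta}{\lambda\pi r_c^2}\sum_{j=1}^{N_f}\ln\Big(\frac{j}{i}\Big)\right),\quad i=1,\dots,N_f.$$ Otherwise, the optimal solution is $$p_c^*(i)=\begin{cases}\frac{1}{i^*}\left(1+\frac{\beta}{\lambda\pi r_c^2}\sum_{j=1}^{i^*}\ln\Big(\frac{j}{i}\Big)\right), & i\le i^*,\\ 0, & i^*<i\le N_f,\end{cases}$$ for an integer $i^*\in\{1,\dots,N_f\}$ satisfying $\frac{\lambda\pi r_c^2}{\beta}-1\le i^*\le \frac{\lambda\pi r_c^2}{\beta}+\ln\big(\sqrt{2\pi N_f}\big)+1$.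
   Context: $p_r$ is the Zipf popularity distribution over a catalog of $N_f$ files; $p_c(i)$ is the probability that a user caches file $i$; the objective is the probability (offloading opportunity) that a file requested by a user is cached by some user within distance $r_c$ when users form a Poisson point process of density $\lambda$ in the plane. *)

theory Defs
  imports Complex_Main
begin

definition zipf_pr :: "nat \<Rightarrow> real \<Rightarrow> nat \<Rightarrow> real" where
  "zipf_pr Nf beta i = real i powr (-beta) / (\<Sum>k=1..Nf. real k powr (-beta))"

definition offload_obj :: "nat \<Rightarrow> real \<Rightarrow> real \<Rightarrow> real \<Rightarrow> (nat \<Rightarrow> real) \<Rightarrow> real" where
  "offload_obj Nf beta lam rc pc =
     (\<Sum>i=1..Nf. zipf_pr Nf beta i * (1 - exp (- lam * pc i * pi * rc^2)))"

definition cache_feasible :: "nat \<Rightarrow> (nat \<Rightarrow> real) \<Rightarrow> bool" where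
  "cache_feasible Nf pc \<longleftrightarrow> (\<Sum>i=1..Nf. pc i) = 1 \<and> (\<forall>i\<in>{1..Nf}. pc i \<ge> 0)"

definition cache_optimal :: "nat \<Rightarrow> real \<Rightarrow> real \<Rightarrow> real \<Rightarrow> (nat \<Rightarrow> real) \<Rightarrow> bool" where
  "cache_optimal Nf beta lam rc pc \<longleftrightarrow>
     cache_feasible Nf pc \<and>
     (\<forall>q. cache_feasible Nf q \<longrightarrow> offload_obj Nf beta lam rc q \<le> offload_obj Nf beta lam rc pc)"

end

theory Submission
  imports Defs
begin

lemma ln_lower2: fixes x :: real assumes "x \<ge> 0" shows "2*x/(2+x) \<le> ln (1+x)"
proof -
  let ?h = "\<lambda>t::real. ln (1+t) - 2*t/(2+t)"
  have "?h 0 \<le> ?h x"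
  proof (rule DERIV_nonneg_imp_nondecreasing[OF assms])
    fix t :: real assume t: "0 \<le> t" "t \<le> x"
    have d: "(?h has_real_derivative (1/(1+t) - (2*(2+t) - 2*t)/(2+t)^2)) (at t)"
      using t by (auto intro!: derivative_eq_intros simp: power2_eq_square)
    have a: "1+t \<noteq> 0" "(2+t)^2 \<noteq> 0" using t by auto
    have "1/(1+t) - (2*(2+t) - 2*t)/(2+t)^2 = t^2/((1+t)*(2+t)^2)"
      using a by (simp add: divide_simps) (simp add: algebra_simps power2_eq_square)
    moreover have "t^2/((1+t)*(2+t)^2) \<ge> 0" using t by simp
    ultimately show "\<exists>y. (?h has_real_derivative y) (at t) \<and> 0 \<le> y" using d by auto
  qed
  thus ?thesis by simp
qed

definition Lsum :: "nat \<Rightarrow> real" where "Lsum k = (\<Sum>j=1..k. ln (real j))"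
definition Ff :: "nat \<Rightarrow> real" where "Ff k = real k * ln (real k) - Lsum k"

lemma Lsum_Suc: "Lsum (Suc k) = Lsum k + ln (real (Suc k))"
  unfolding Lsum_def by simp

lemma ln_fact: "ln (fact k) = Lsum k"
proof (induction k)
  case 0 then show ?case by (simp add: Lsum_def)
next
  case (Suc k)
  have "ln (fact (Suc k) :: real) = ln (real (Suc k)) + ln (fact k)"
    by (simp add: ln_mult del: of_nat_Suc)
  then show ?case using Suc Lsum_Suc by simp
qed

lemma sum_ln_div: assumes "i \<ge> 1"
  shows "(\<Sum>j=1..m. ln (real j / real i)) = Lsum m - real m * ln (real i)"
proof -
  have "(\<Sum>j=1..m. ln (real j / real i)) = (\<Sum>j=1..m. ln (real j) - ln (real i))"
    using assms by (intro sum.cong) (auto simp: ln_div)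
  also have "\<dots> = Lsum m - real m * ln (real i)" by (simp add: sum_subtractf Lsum_def)
  finally show ?thesis .
qed

lemma Ff_Suc: "Ff (Suc k) = Ff k + real k * (ln (real k + 1) - ln (real k))"
  unfolding Ff_def using Lsum_Suc[of k] by (simp add: algebra_simps)

lemma Ff_one: "Ff 1 = 0" by (simp add: Ff_def Lsum_def)

lemma Ff_le: "k \<ge> 1 \<Longrightarrow> Ff k \<le> real k"
proof (induction k rule: dec_induct)
  case base then show ?case using Ff_one by simp
next
  case (step k)
  have k: "real k > 0" using step by simp
  have "ln (real k + 1) - ln (real k) = ln (1 + 1/real k)"
  proof -
    have "1 + 1/real k = (real k + 1) / real k" using k by (simp add: field_simps)
    thus ?thesis using k by (simp add: ln_div)
  qed
  also have "\<dots> \<le> 1/real k" by (rule ln_add_one_self_le_self) simp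
  finally have "real k * (ln (real k + 1) - ln (real k)) \<le> 1"
    using k by (simp add: field_simps)
  then show ?case using step Ff_Suc[of k] by simp
qed

lemma Ff_ge: "k \<ge> 1 \<Longrightarrow> real k - Ff k \<le> 1 + ln (real k) / 2"
proof (induction k rule: dec_induct)
  case base then show ?case using Ff_one by simp
next
  case (step k)
  have k: "real k > 0" using step by simp
  have e: "ln (real k + 1) - ln (real k) = ln (1 + 1/real k)"
  proof -
    have "1 + 1/real k = (real k + 1) / real k" using k by (simp add: field_simps)
    thus ?thesis using k by (simp add: ln_div)
  qed
  have "2*(1/real k)/(2+1/real k) \<le> ln (1 + 1/real k)" by (rule ln_lower2) simp
  moreover have "2*(1/real k)/(2+1/real k) = 2/(2*real k+1)" using k by (simp add: field_simps)
  ultimately have "2/(2*real k+1) \<le> ln (real k + 1) - ln (real k)" using e by simp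
  hence "2 \<le> (2*real k+1) * (ln (real k + 1) - ln (real k))"
    using k by (simp add: divide_simps mult.commute)
  then show ?case using step Ff_Suc[of k] by (simp add: algebra_simps)
qed

lemma Ff_Suc_eq: "Ff (Suc m) = real m * ln (real m + 1) - Lsum m"
  unfolding Ff_def using Lsum_Suc[of m] by (simp add: algebra_simps)

lemma ln_ratio: assumes "N \<ge> 1" shows "ln (real N ^ N / fact N) = Ff N"
  using assms by (simp add: ln_div ln_realpow ln_fact Ff_def)


lemma tangent: fixes c x y :: real
  shows "1 - exp (-c*x) \<le> 1 - exp (-c*y) + c*exp(-c*y)*(x - y)"
proof -
  have "exp (-c*x) = exp (-c*y) * exp (-c*(x-y))" by (simp add: exp_add[symmetric] algebra_simps)
  moreover have "1 + (-c*(x-y)) \<le> exp (-c*(x-y))" by (rule exp_ge_add_one_self)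
  ultimately have "exp (-c*y) * (1 - c*(x-y)) \<le> exp (-c*x)"
    by (simp add: mult_left_mono)
  thus ?thesis by (simp add: algebra_simps)
qed

lemma kkt:
  fixes p qs q :: "nat \<Rightarrow> real" and c \<nu> :: real
  assumes fs: "cache_feasible N qs" and fq: "cache_feasible N q"
    and p: "\<forall>i\<in>{1..N}. p i \<ge> 0"
    and le: "\<forall>i\<in>{1..N}. p i * c * exp (-c * qs i) \<le> \<nu>"
    and eq: "\<forall>i\<in>{1..N}. qs i \<noteq> 0 \<longrightarrow> p i * c * exp (-c * qs i) = \<nu>"
  shows "(\<Sum>i=1..N. p i * (1 - exp (-c * q i))) \<le> (\<Sum>i=1..N. p i * (1 - exp (-c * qs i)))"
proof -
  let ?w = "\<lambda>i. p i * c * exp (-c * qs i)"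
  have "(\<Sum>i=1..N. p i * (1 - exp (-c * q i))) \<le>
        (\<Sum>i=1..N. p i * (1 - exp (-c * qs i)) + ?w i * (q i - qs i))"
  proof (rule sum_mono)
    fix i assume i: "i \<in> {1..N}"
    have "p i * (1 - exp (-c * q i)) \<le> p i * (1 - exp (-c*qs i) + c*exp(-c*qs i)*(q i - qs i))"
      using p i tangent by (intro mult_left_mono) auto
    thus "p i * (1 - exp (-c * q i)) \<le> p i * (1 - exp (-c * qs i)) + ?w i * (q i - qs i)"
      by (simp add: algebra_simps)
  qed
  also have "\<dots> = (\<Sum>i=1..N. p i * (1 - exp (-c * qs i))) + (\<Sum>i=1..N. ?w i * (q i - qs i))"
    by (simp add: sum.distrib)
  also have "(\<Sum>i=1..N. ?w i * (q i - qs i)) \<le> (\<Sum>i=1..N. \<nu> * (q i - qs i))"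
  proof (rule sum_mono)
    fix i assume i: "i \<in> {1..N}"
    show "?w i * (q i - qs i) \<le> \<nu> * (q i - qs i)"
    proof (cases "qs i = 0")
      case True
      have "q i \<ge> 0" using fq i by (auto simp: cache_feasible_def)
      have "?w i \<le> \<nu>" using le i by auto
      then show ?thesis using \<open>q i \<ge> 0\<close> True by (simp add: mult_right_mono)
    next
      case False then show ?thesis using eq i by auto
    qed
  qed
  also have "(\<Sum>i=1..N. \<nu> * (q i - qs i)) = 0"
    using fs fq by (simp add: sum_distrib_left[symmetric] sum_subtractf cache_feasible_def)
  finally show ?thesis by simp
qed


lemma obj_eq: "offload_obj N beta lam rc q =
   (\<Sum>i=1..N. zipf_pr N beta i * (1 - exp (- (lam*pi*rc^2) * q i)))"
  unfolding offload_obj_def by (intro sum.cong) (auto simp: algebra_simps)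

lemma main_opt:
  fixes N m :: nat and beta lam rc c :: real
  assumes m1: "1 \<le> m" and mN: "m \<le> N" and b: "beta > 0" and l: "lam > 0" and r: "rc > 0"
    and cdef: "c = lam*pi*rc^2"
    and F1: "Ff m \<le> c / beta" and F2: "m < N \<longrightarrow> c / beta \<le> Ff (Suc m)"
  shows "cache_optimal N beta lam rc
           (\<lambda>i. if i \<le> m then 1 / real m * (1 + beta / (lam*pi*rc^2) *
                     (\<Sum>j=1..m. ln (real j / real i))) else 0)"
proof -
  define qs where "qs = (\<lambda>i. if i \<le> m then 1 / real m * (1 + beta / (lam*pi*rc^2) *
                     (\<Sum>j=1..m. ln (real j / real i))) else 0)"
  define L where "L = Lsum m"
  have c: "c > 0" using cdef l r by simp
  have mpos: "real m > 0" using m1 by simp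
  have qsi: "qs i = 1/real m + (beta/c)/real m * L - (beta/c) * ln (real i)"
    if "1 \<le> i" "i \<le> m" for i
  proof -
    have "qs i = 1 / real m * (1 + beta / c * (L - real m * ln (real i)))"
      using that sum_ln_div[of i m] unfolding qs_def L_def cdef[symmetric] by simp
    also have "\<dots> = 1/real m + (beta/c)/real m * L - (beta/c) * (real m / real m) * ln (real i)"
      by (simp add: algebra_simps)
    finally show ?thesis using mpos by simp
  qed
  have qs0: "qs i = 0" if "m < i" for i using that by (simp add: qs_def)
  have "(\<Sum>i=1..N. qs i) = (\<Sum>i=1..m. qs i)"
    using mN by (intro sum.mono_neutral_right) (auto simp: qs0)
  also have "\<dots> = (\<Sum>i=1..m. 1/real m + (beta/c)/real m * L - (beta/c) * ln (real i))"
    by (intro sum.cong) (auto simp: qsi)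
  also have "\<dots> = real m * (1/real m + (beta/c)/real m * L) - (beta/c) * L"
    by (simp only: sum_subtractf sum_constant card_atLeastAtMost sum_distrib_left[symmetric] L_def Lsum_def)
      simp
  also have "\<dots> = 1" using mpos c by (simp add: field_simps)
  finally have s1: "(\<Sum>i=1..N. qs i) = 1" .
  have nn: "qs i \<ge> 0" if "i \<in> {1..N}" for i
  proof (cases "i \<le> m")
    case True
    have i1: "1 \<le> i" using that by simp
    have "ln (real i) \<le> ln (real m)" using True i1 by simp
    hence "real m * ln (real i) \<le> real m * ln (real m)" using mpos by simp
    moreover have "real m * ln (real m) - L \<le> c / beta" using F1 by (simp add: Ff_def L_def)
    ultimately have "real m * ln (real i) - L \<le> c/beta" by simp
    hence "beta * (real m * ln (real i) - L) \<le> c" using b by (simp add: field_simps)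
    hence "- 1 \<le> beta / c * (L - real m * ln (real i))" using c by (simp add: field_simps)
    moreover have "qs i = 1 / real m * (1 + beta / c * (L - real m * ln (real i)))"
      using True i1 sum_ln_div[of i m] unfolding qs_def L_def cdef[symmetric] by simp
    ultimately show ?thesis using c mpos by simp
  next
    case False then show ?thesis by (simp add: qs0)
  qed
  have feas: "cache_feasible N qs" using s1 nn by (simp add: cache_feasible_def)
  define S where "S = (\<Sum>k=1..N. real k powr (-beta))"
  have Spos: "S > 0" unfolding S_def using mN m1
    by (intro sum_pos) auto
  define A where "A = (c + beta * L) / real m"
  define \<nu> where "\<nu> = c / S * exp (- A)"
  have p: "zipf_pr N beta i = exp (- beta * ln (real i)) / S" if "i \<ge> 1" for i
    using that by (simp add: zipf_pr_def S_def powr_def)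
  have w_eq: "zipf_pr N beta i * c * exp (-c * qs i) = \<nu>" if "1 \<le> i" "i \<le> m" for i
  proof -
    have "c * qs i = A - beta * ln (real i)"
    proof -
      have "c * qs i = c/real m + beta * L / real m - beta * ln (real i)"
        unfolding qsi[OF that] using c by (simp add: ring_distribs)
      also have "\<dots> = A - beta * ln (real i)" by (simp add: A_def add_divide_distrib)
      finally show ?thesis .
    qed
    hence "zipf_pr N beta i * c * exp (-c * qs i)
           = c / S * (exp (- beta * ln (real i)) * exp (beta * ln (real i) - A))"
      using p[OF that(1)] by simp
    also have "\<dots> = \<nu>" by (simp add: \<nu>_def exp_add[symmetric])
    finally show ?thesis .
  qed
  have w_le: "zipf_pr N beta i * c * exp (-c * qs i) \<le> \<nu>" if "i \<in> {1..N}" for i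
  proof (cases "i \<le> m")
    case True then show ?thesis using w_eq that by simp
  next
    case False
    hence mi: "m < i" "m < N" using that by auto
    have "c / beta \<le> real m * ln (real m + 1) - L"
      using F2 mi Ff_Suc_eq[of m] by (simp add: L_def)
    moreover have "ln (real m + 1) \<le> ln (real i)" using mi by simp
    ultimately have "c / beta \<le> real m * ln (real i) - L"
      using mpos by (smt (verit) mult_left_mono)
    hence "c \<le> beta * (real m * ln (real i) - L)" using b by (simp add: field_simps)
    hence "A \<le> beta * ln (real i)" using mpos unfolding A_def by (simp add: field_simps)
    hence "exp (- beta * ln (real i)) \<le> exp (- A)" by simp
    hence "exp (- beta * ln (real i)) / S * c \<le> exp (- A) / S * c"
      using Spos c by (simp add: divide_right_mono)
    moreover have "\<nu> = exp (- A) / S * c" by (simp add: \<nu>_def)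
    ultimately show ?thesis using p[of i] mi qs0[OF mi(1)] by simp
  qed
  have opt: "offload_obj N beta lam rc q \<le> offload_obj N beta lam rc qs"
    if "cache_feasible N q" for q
  proof -
    have pn: "\<forall>i\<in>{1..N}. zipf_pr N beta i \<ge> 0"
      using Spos unfolding zipf_pr_def S_def[symmetric] by simp
    have eqs: "\<forall>i\<in>{1..N}. qs i \<noteq> 0 \<longrightarrow> zipf_pr N beta i * c * exp (-c * qs i) = \<nu>"
    proof (intro ballI impI)
      fix i assume i: "i \<in> {1..N}" and q: "qs i \<noteq> 0"
      have "i \<le> m" using q qs0 not_le by blast
      thus "zipf_pr N beta i * c * exp (-c * qs i) = \<nu>" using w_eq i by simp
    qed
    show ?thesis unfolding obj_eq cdef[symmetric]
      by (rule kkt[OF feas that pn _ eqs]) (use w_le in blast)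
  qed
  show ?thesis using feas opt unfolding cache_optimal_def qs_def by blast
qed


lemma opt_cong: assumes "\<forall>i\<in>{1..N}. f i = g i"
  shows "cache_optimal N beta lam rc f = cache_optimal N beta lam rc g"
proof -
  have "cache_feasible N f = cache_feasible N g"
  proof -
    have "sum f {1..N} = sum g {1..N}" using assms by (intro sum.cong) auto
    thus ?thesis unfolding cache_feasible_def using assms by auto
  qed
  moreover have "offload_obj N beta lam rc f = offload_obj N beta lam rc g"
    unfolding offload_obj_def using assms by (intro sum.cong) auto
  ultimately show ?thesis unfolding cache_optimal_def by simp
qed

theorem proposition1:
  fixes Nf :: nat and beta lam rc :: real
  assumes "Nf \<ge> 2" and "beta > 0" and "lam > 0" and "rc > 0"
  shows "(real Nf ^ Nf / fact Nf < exp (lam * pi * rc^2 / beta) \<longrightarrow>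
           cache_optimal Nf beta lam rc
             (\<lambda>i. 1 / real Nf * (1 + beta / (lam * pi * rc^2) *
                     (\<Sum>j=1..Nf. ln (real j / real i)))))
       \<and> (\<not> (real Nf ^ Nf / fact Nf < exp (lam * pi * rc^2 / beta)) \<longrightarrow>
           (\<exists>istar\<in>{1..Nf}.
              lam * pi * rc^2 / beta - 1 \<le> real istar \<and>
              real istar \<le> lam * pi * rc^2 / beta + ln (sqrt (2 * pi * real Nf)) + 1 \<and>
              cache_optimal Nf beta lam rc
                (\<lambda>i. if i \<le> istar
                      then 1 / real istar * (1 + beta / (lam * pi * rc^2) *
                             (\<Sum>j=1..istar. ln (real j / real i)))
                      else 0)))"
proof -
  define c where "c = lam * pi * rc^2"
  have N1: "Nf \<ge> 1" using assms by simp
  have pos: "real Nf ^ Nf / fact Nf > 0" using N1 by simp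
  have eqv: "real Nf ^ Nf / fact Nf < exp (c / beta) \<longleftrightarrow> Ff Nf < c / beta"
  proof -
    have "real Nf ^ Nf / fact Nf = exp (Ff Nf)" using ln_ratio[OF N1] pos
      by (metis exp_ln)
    thus ?thesis by simp
  qed
  have part1: "real Nf ^ Nf / fact Nf < exp (c / beta) \<longrightarrow>
           cache_optimal Nf beta lam rc
             (\<lambda>i. 1 / real Nf * (1 + beta / c * (\<Sum>j=1..Nf. ln (real j / real i))))"
  proof
    assume "real Nf ^ Nf / fact Nf < exp (c / beta)"
    hence F: "Ff Nf \<le> c / beta" using eqv by simp
    have "cache_optimal Nf beta lam rc
           (\<lambda>i. if i \<le> Nf then 1 / real Nf * (1 + beta / (lam*pi*rc^2) *
                     (\<Sum>j=1..Nf. ln (real j / real i))) else 0)"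
      by (rule main_opt[OF N1 order_refl assms(2-4) c_def F]) simp
    thus "cache_optimal Nf beta lam rc
             (\<lambda>i. 1 / real Nf * (1 + beta / c * (\<Sum>j=1..Nf. ln (real j / real i))))"
      by (subst opt_cong[where g = "\<lambda>i. if i \<le> Nf then 1 / real Nf * (1 + beta / (lam*pi*rc^2) *
                     (\<Sum>j=1..Nf. ln (real j / real i))) else 0"]) (auto simp: c_def)
  qed
  have part2: "\<not> (real Nf ^ Nf / fact Nf < exp (c / beta)) \<longrightarrow>
           (\<exists>istar\<in>{1..Nf}.
              c / beta - 1 \<le> real istar \<and>
              real istar \<le> c / beta + ln (sqrt (2 * pi * real Nf)) + 1 \<and>
              cache_optimal Nf beta lam rc
                (\<lambda>i. if i \<le> istar
                      then 1 / real istar * (1 + beta / (lam * pi * rc^2) *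
                             (\<Sum>j=1..istar. ln (real j / real i)))
                      else 0))"
  proof
    assume "\<not> (real Nf ^ Nf / fact Nf < exp (c / beta))"
    hence FN: "c / beta \<le> Ff Nf" using eqv by simp
    have cpos: "c > 0" using assms by (simp add: c_def)
    define M where "M = {k\<in>{1..Nf}. Ff k \<le> c / beta}"
    define m where "m = Max M"
    have fin: "finite M" by (simp add: M_def)
    have "1 \<in> M" using N1 Ff_one cpos assms(2) by (simp add: M_def)
    hence mM: "m \<in> M" using fin m_def Max_in by blast
    hence m1: "1 \<le> m" and mN: "m \<le> Nf" and Fm: "Ff m \<le> c / beta" by (auto simp: M_def)
    have F2: "m < Nf \<longrightarrow> c / beta < Ff (Suc m)"
    proof
      assume "m < Nf"
      have "Suc m \<notin> M"
      proof
        assume "Suc m \<in> M"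
        hence "Suc m \<le> m" using fin m_def Max_ge by blast
        thus False by simp
      qed
      thus "c / beta < Ff (Suc m)" using \<open>m < Nf\<close> by (auto simp: M_def)
    qed
    have lower: "c / beta - 1 \<le> real m"
    proof (cases "m < Nf")
      case True
      then show ?thesis using F2 Ff_le[of "Suc m"] by simp
    next
      case False
      hence "m = Nf" using mN by simp
      then show ?thesis using FN Ff_le[OF N1] by simp
    qed
    have upper: "real m \<le> c / beta + ln (sqrt (2 * pi * real Nf)) + 1"
    proof -
      have "ln (real m) \<le> ln (2 * pi * real Nf)"
      proof -
        have "1 \<le> 2 * pi" using pi_ge_two by simp
        hence "real Nf * 1 \<le> real Nf * (2 * pi)" by (intro mult_left_mono) auto
        hence "real m \<le> 2 * pi * real Nf" using mN by (simp add: mult.commute)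
        thus ?thesis using m1 by simp
      qed
      moreover have "ln (sqrt (2 * pi * real Nf)) = ln (2 * pi * real Nf) / 2"
        using N1 by (simp add: ln_sqrt)
      ultimately show ?thesis using Ff_ge[OF m1] Fm by simp
    qed
    show "\<exists>istar\<in>{1..Nf}.
              c / beta - 1 \<le> real istar \<and>
              real istar \<le> c / beta + ln (sqrt (2 * pi * real Nf)) + 1 \<and>
              cache_optimal Nf beta lam rc
                (\<lambda>i. if i \<le> istar
                      then 1 / real istar * (1 + beta / (lam * pi * rc^2) *
                             (\<Sum>j=1..istar. ln (real j / real i)))
                      else 0)"
      using m1 mN lower upper main_opt[OF m1 mN assms(2-4) c_def Fm] F2 by auto
  qed
  show ?thesis using part1 part2 unfolding c_def by blast
qed

end
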